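(* Let $(b,c,d)\in\bar S$. Then $(b,c,d)$ has no inverse image under $\bar M_B$ in $\bar S$ if and only if one of the following holds: (i) $b,c,d$ are neither all even nor all odd; (ii) $b,c,d$ are all even, but $c\not\equiv 0\pmod 4$ or $d\not\equiv 0\pmod 8$; (iii) $b,c,d$ are all odd, but $-2b+c\not\equiv 1\pmod 4$ or $b-c+d\not\equiv 1\pmod 8$.
   Context: $\bar S$ is the set of all $(b,c,d)\in\mathbb{Z}^3$ with $b^2-3c\le 0$, $d<0$, $1+b+c+d>0$; for $(b,c,d)\in\bar S$, $\pi(b,c,d)$ is the unique real root (in $(0,1)$) of $x^3+bx^2+cx+d$. The map $\bar M_B:\bar S\to\bar S$ is defined by: let $\alpha=\pi(b,c,d)$; if $\alpha\in(0,1/2)$ then $\bar M_B(b,c,d)=(2b,4c,8d)$, and if $\alpha\in(1/2,1)$ then $\bar M_B(b,c,d)=(2b+3,\,4b+4c+3,\,2b+4c+8d+1)$. (This is the conjugate $\pi^{-1}\circ M_B\circ\pi$ of the Bernoulli map $M_B(x)=2x\bmod 1$.) *)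

theory Defs
  imports Complex_Main
begin

definition Sbar :: "(int \<times> int \<times> int) set" where
  "Sbar = {(b, c, d). b^2 - 3*c \<le> 0 \<and> d < 0 \<and> 1 + b + c + d > 0}"

text \<open>The unique real root of x^3 + b x^2 + c x + d (it lies in (0,1) for points of Sbar).\<close>
definition piS :: "int \<times> int \<times> int \<Rightarrow> real" where
  "piS p = (case p of (b, c, d) \<Rightarrow>
     THE x::real. x^3 + of_int b * x^2 + of_int c * x + of_int d = 0)"

text \<open>The conjugated Bernoulli map. The value 1/2 never occurs as a root for
  integer coefficients (1 + 2b + 4c + 8d is odd), so the case split below is exhaustive.\<close>
definition MB :: "int \<times> int \<times> int \<Rightarrow> int \<times> int \<times> int" where
  "MB p = (case p of (b, c, d) \<Rightarrow>
     (if piS (b, c, d) < 1/2 then (2*b, 4*c, 8*d)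
      else (2*b + 3, 4*b + 4*c + 3, 2*b + 4*c + 8*d + 1)))"

end

theory Submission
  imports Defs
begin

definition fp :: "int \<Rightarrow> int \<Rightarrow> int \<Rightarrow> real \<Rightarrow> real" where
  "fp b c d x = x^3 + of_int b * x^2 + of_int c * x + of_int d"

lemma fp_mono:
  assumes "b^2 - 3*c \<le> 0" "x < y"
  shows "fp b c d x < fp b c d y"
proof -
  have h: "real_of_int b ^ 2 - 3 * real_of_int c \<le> 0"
    using assms(1) by (metis of_int_le_0_iff of_int_diff of_int_mult of_int_numeral of_int_power)
  define s where "s = x + y"
  have q: "x^2 + x*y + y^2 + of_int b * (x+y) + of_int c =
     3/4 * (s + 2 * of_int b / 3)^2 + (3 * of_int c - of_int b ^ 2)/3 + (x-y)^2/4"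
    unfolding s_def by (simp add: power2_eq_square field_simps)
  have "(x-y)^2 > 0" using assms(2) by simp
  moreover have "3/4 * (s + 2 * of_int b / 3)^2 \<ge> (0::real)" by simp
  moreover have "(3 * of_int c - of_int b ^ 2)/3 \<ge> (0::real)" using h by simp
  ultimately have qp: "x^2 + x*y + y^2 + of_int b * (x+y) + of_int c > 0"
    using q by linarith
  have "fp b c d y - fp b c d x = (y - x) * (x^2 + x*y + y^2 + of_int b * (x+y) + of_int c)"
    unfolding fp_def by (simp add: power2_eq_square power3_eq_cube algebra_simps)
  moreover have "(y - x) * (x^2 + x*y + y^2 + of_int b * (x+y) + of_int c) > 0"
    using qp assms(2) by simp
  ultimately show ?thesis by linarith
qed

lemma piS_eq:
  assumes "b^2 - 3*c \<le> 0" "fp b c d r = 0"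
  shows "piS (b, c, d) = r"
  unfolding piS_def
proof (simp, rule the_equality)
  show "r^3 + of_int b * r^2 + of_int c * r + of_int d = 0" using assms(2) by (simp add: fp_def)
next
  fix x assume "x ^ 3 + real_of_int b * x\<^sup>2 + real_of_int c * x + real_of_int d = 0"
  hence "fp b c d x = 0" by (simp add: fp_def)
  show "x = r"
  proof (rule ccontr)
    assume "x \<noteq> r"
    hence "x < r \<or> r < x" by linarith
    thus False using fp_mono[OF assms(1), of x r d] fp_mono[OF assms(1), of r x d]
      \<open>fp b c d x = 0\<close> assms(2) by auto
  qed
qed

lemma root_exists:
  assumes "(b, c, d) \<in> Sbar"
  shows "\<exists>r. 0 < r \<and> r < 1 \<and> fp b c d r = 0"
proof -
  have s: "d < 0" "1 + b + c + d > 0" using assms by (auto simp: Sbar_def)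
  have f0: "fp b c d 0 < 0" using s by (simp add: fp_def)
  have f1: "fp b c d 1 > 0"
  proof -
    have "real_of_int (1 + b + c + d) > 0" using s by linarith
    thus ?thesis by (simp add: fp_def)
  qed
  have "\<exists>x\<ge>0. x \<le> 1 \<and> fp b c d x = 0"
    by (rule IVT) (use f0 f1 in \<open>auto simp: fp_def intro!: continuous_intros\<close>)
  then obtain x where "0 \<le> x" "x \<le> 1" "fp b c d x = 0" by blast
  moreover have "x \<noteq> 0" "x \<noteq> 1" using f0 f1 \<open>fp b c d x = 0\<close> by auto
  ultimately show ?thesis by (intro exI[of _ x]) auto
qed

theorem fact2:
  fixes b c d :: int
  assumes "(b, c, d) \<in> Sbar"
  shows "(\<not> (\<exists>p \<in> Sbar. MB p = (b, c, d))) \<longleftrightarrow>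
    ((\<not> (even b \<and> even c \<and> even d) \<and> \<not> (odd b \<and> odd c \<and> odd d))
     \<or> (even b \<and> even c \<and> even d \<and> (c mod 4 \<noteq> 0 \<or> d mod 8 \<noteq> 0))
     \<or> (odd b \<and> odd c \<and> odd d \<and> ((-2*b + c) mod 4 \<noteq> 1 \<or> (b - c + d) mod 8 \<noteq> 1)))"
proof -
  have disc: "b^2 - 3*c \<le> 0" using assms by (simp add: Sbar_def)
  obtain r where r: "0 < r" "r < 1" "fp b c d r = 0" using root_exists[OF assms] by blast
  have fwd: "(even b \<and> even c \<and> even d \<and> c mod 4 = 0 \<and> d mod 8 = 0)
     \<or> (odd b \<and> odd c \<and> odd d \<and> (-2*b + c) mod 4 = 1 \<and> (b - c + d) mod 8 = 1)"
    if "MB p = (b, c, d)" for p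
  proof -
    obtain b' c' d' where p: "p = (b', c', d')" by (cases p) auto
    show ?thesis
    proof (cases "piS (b', c', d') < 1/2")
      case True
      hence "b = 2*b'" "c = 4*c'" "d = 8*d'" using that p by (auto simp: MB_def)
      thus ?thesis by presburger
    next
      case False
      hence "b = 2*b'+3" "c = 4*b'+4*c'+3" "d = 2*b'+4*c'+8*d'+1" using that p by (auto simp: MB_def)
      thus ?thesis by presburger
    qed
  qed
  have bwd: "\<exists>p \<in> Sbar. MB p = (b, c, d)"
    if "(even b \<and> even c \<and> even d \<and> c mod 4 = 0 \<and> d mod 8 = 0)
     \<or> (odd b \<and> odd c \<and> odd d \<and> (-2*b + c) mod 4 = 1 \<and> (b - c + d) mod 8 = 1)"
    using that
  proof
    assume h: "even b \<and> even c \<and> even d \<and> c mod 4 = 0 \<and> d mod 8 = 0"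
    define b' where "b' = b div 2"
    define c' where "c' = c div 4"
    define d' where "d' = d div 8"
    have e: "b = 2*b'" "c = 4*c'" "d = 8*d'" using h unfolding b'_def c'_def d'_def by presburger+
    have disc': "b'^2 - 3*c' \<le> 0" using disc e by (simp add: power2_eq_square)
    have rr: "fp b' c' d' (r/2) = 0"
      using r(3) e by (simp add: fp_def power2_eq_square power3_eq_cube field_simps)
    have "fp b' c' d' 1 > 0" using fp_mono[OF disc', of "r/2" 1 d'] rr r by simp
    hence "1 + b' + c' + d' > 0" by (simp add: fp_def)
    moreover have "d' < 0" using assms e by (simp add: Sbar_def)
    ultimately have inS: "(b', c', d') \<in> Sbar" using disc' by (simp add: Sbar_def)
    have "piS (b', c', d') = r/2" using piS_eq[OF disc' rr] .
    hence "MB (b', c', d') = (b, c, d)" using e r by (simp add: MB_def)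
    thus ?thesis using inS by blast
  next
    assume h: "odd b \<and> odd c \<and> odd d \<and> (-2*b + c) mod 4 = 1 \<and> (b - c + d) mod 8 = 1"
    define b' where "b' = (b - 3) div 2"
    define c' where "c' = (c - 2*b + 3) div 4"
    define d' where "d' = (b - c + d - 1) div 8"
    have hb: "odd b" and h4: "(-2*b + c) mod 4 = 1" and h8: "(b - c + d) mod 8 = 1" using h by auto
    have m2: "(b - 3) mod 2 = 0" using hb by presburger
    have m4: "(c - 2*b + 3) mod 4 = 0" using h4 by presburger
    have m8: "(b - c + d - 1) mod 8 = 0" using h8 by presburger
    have e1: "b - 3 = 2*b'" unfolding b'_def using mult_div_mod_eq[of 2 "b - 3"] m2 by linarith
    have e2: "c - 2*b + 3 = 4*c'" unfolding c'_def using mult_div_mod_eq[of 4 "c - 2*b + 3"] m4 by linarith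
    have e3: "b - c + d - 1 = 8*d'" unfolding d'_def using mult_div_mod_eq[of 8 "b - c + d - 1"] m8 by linarith
    have e: "b = 2*b'+3" "c = 4*b'+4*c'+3" "d = 2*b'+4*c'+8*d'+1"
      using e1 e2 e3 by linarith+
    have disc': "b'^2 - 3*c' \<le> 0"
    proof -
      have "4*b'^2 - 12*c' = b^2 - 3*c" using e by (simp add: power2_eq_square algebra_simps)
      thus ?thesis using disc by linarith
    qed
    have rel: "\<And>x. fp b c d (2*x - 1) = 8 * fp b' c' d' x"
      using e by (simp add: fp_def power2_eq_square power3_eq_cube algebra_simps)
    have rr: "fp b' c' d' ((r+1)/2) = 0"
    proof -
      have "2*((r+1)/2) - 1 = r" by (simp add: field_simps)
      thus ?thesis using rel[of "(r+1)/2"] r(3) by simp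
    qed
    have "fp b' c' d' 1 > 0" using fp_mono[OF disc', of "(r+1)/2" 1 d'] rr r by simp
    hence "real_of_int (1 + b' + c' + d') > 0" by (simp add: fp_def)
    hence "1 + b' + c' + d' > 0" by simp
    moreover have "fp b' c' d' 0 < 0" using fp_mono[OF disc', of 0 "(r+1)/2" d'] rr r by simp
    hence "d' < 0" by (simp add: fp_def)
    ultimately have inS: "(b', c', d') \<in> Sbar" using disc' by (simp add: Sbar_def)
    have "piS (b', c', d') = (r+1)/2" using piS_eq[OF disc' rr] .
    hence "MB (b', c', d') = (b, c, d)" using e r by (simp add: MB_def)
    thus ?thesis using inS by blast
  qed
  have PQ: "(\<exists>p \<in> Sbar. MB p = (b, c, d)) \<longleftrightarrow> ((even b \<and> even c \<and> even d \<and> c mod 4 = 0 \<and> d mod 8 = 0)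
     \<or> (odd b \<and> odd c \<and> odd d \<and> (-2*b + c) mod 4 = 1 \<and> (b - c + d) mod 8 = 1))"
  proof
    assume "\<exists>p \<in> Sbar. MB p = (b, c, d)"
    then obtain p where "MB p = (b, c, d)" by blast
    thus "(even b \<and> even c \<and> even d \<and> c mod 4 = 0 \<and> d mod 8 = 0)
     \<or> (odd b \<and> odd c \<and> odd d \<and> (-2*b + c) mod 4 = 1 \<and> (b - c + d) mod 8 = 1)" by (rule fwd)
  qed (rule bwd)
  show ?thesis unfolding PQ by auto
qed

end
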